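(* Let $V=V_1\oplus V_2\oplus V_3$ and $R=\mathcal{O}(V)^{\mathrm{SL}_2(\mathbb{C})}$. Then $R$ has no homogeneous system of parameters with degrees $2,3,3,4,4,5$.
   Context: $V_k$ is the $\mathrm{SL}_2(\mathbb{C})$-module of complex binary forms of degree $k$; $R$ is the graded algebra of invariant polynomial functions on $V$. A homogeneous system of parameters is a set of algebraically independent homogeneous elements of positive degree over whose generated subalgebra $R$ is integral. *)

theory Defs
  imports Complex_Main
begin

text \<open>Points of V = V_1 + V_2 + V_3 are coefficient families x (k,i), k in {1,2,3},
  0 <= i <= k, where x (k,i) is the coefficient of X^(k-i) Y^i of the binary
  form of degree k.\<close>

definition coords :: "(nat \<times> nat) set" where
  "coords = {(k, i). k \<in> {1, 2, 3} \<and> i \<le> k}"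

definition Vspace :: "(nat \<times> nat \<Rightarrow> complex) set" where
  "Vspace = {x. \<forall>p. p \<notin> coords \<longrightarrow> x p = 0}"

definition mono :: "(nat \<times> nat \<Rightarrow> nat) \<Rightarrow> (nat \<times> nat \<Rightarrow> complex) \<Rightarrow> complex" where
  "mono e x = (\<Prod>p\<in>coords. x p ^ e p)"

definition mdeg :: "(nat \<times> nat \<Rightarrow> nat) \<Rightarrow> nat" where
  "mdeg e = (\<Sum>p\<in>coords. e p)"

definition poly_fun :: "((nat \<times> nat \<Rightarrow> complex) \<Rightarrow> complex) \<Rightarrow> bool" where
  "poly_fun F \<longleftrightarrow> (\<exists>M c. finite M \<and> (\<forall>x\<in>Vspace. F x = (\<Sum>e\<in>M. c e * mono e x)))"

definition homog :: "nat \<Rightarrow> ((nat \<times> nat \<Rightarrow> complex) \<Rightarrow> complex) \<Rightarrow> bool" where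
  "homog d F \<longleftrightarrow> (\<exists>M c. finite M \<and> (\<forall>e\<in>M. mdeg e = d) \<and>
      (\<forall>x\<in>Vspace. F x = (\<Sum>e\<in>M. c e * mono e x)))"

text \<open>SL_2(C), with g = (a,b,c,d) standing for the matrix [[a,b],[c,d]].\<close>

definition SL2 :: "(complex \<times> complex \<times> complex \<times> complex) set" where
  "SL2 = {(a, b, c, d). a * d - b * c = 1}"

text \<open>Action of g on binary forms by substitution:
  (g.f)(X,Y) = f(aX + bY, cX + dY). The new coefficient of X^(k-j) Y^j is
  computed by expanding (aX+bY)^(k-i) (cX+dY)^i.\<close>

definition act :: "complex \<times> complex \<times> complex \<times> complex \<Rightarrow>
    (nat \<times> nat \<Rightarrow> complex) \<Rightarrow> (nat \<times> nat \<Rightarrow> complex)" where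
  "act g x = (\<lambda>(k, j). case g of (a, b, c, d) \<Rightarrow>
     if (k, j) \<in> coords then
       (\<Sum>i\<le>k. x (k, i) * (\<Sum>p\<le>j.
          of_nat ((k - i) choose p) * of_nat (i choose (j - p)) *
          a ^ (k - i - p) * b ^ p * c ^ (i - (j - p)) * d ^ (j - p)))
     else 0)"

definition invariant :: "((nat \<times> nat \<Rightarrow> complex) \<Rightarrow> complex) \<Rightarrow> bool" where
  "invariant F \<longleftrightarrow> poly_fun F \<and> (\<forall>g\<in>SL2. \<forall>x\<in>Vspace. F (act g x) = F x)"

definition gen_alg :: "nat \<Rightarrow> (nat \<Rightarrow> (nat \<times> nat \<Rightarrow> complex) \<Rightarrow> complex)
    \<Rightarrow> ((nat \<times> nat \<Rightarrow> complex) \<Rightarrow> complex) set" where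
  "gen_alg n f = {F. \<exists>M c. finite M \<and>
      (\<forall>x\<in>Vspace. F x = (\<Sum>e\<in>M. c e * (\<Prod>i<n. f i x ^ e i)))}"

definition alg_indep :: "nat \<Rightarrow> (nat \<Rightarrow> (nat \<times> nat \<Rightarrow> complex) \<Rightarrow> complex) \<Rightarrow> bool" where
  "alg_indep n f \<longleftrightarrow> (\<forall>M c. finite M \<longrightarrow> (\<forall>e\<in>M. \<forall>i\<ge>n. e i = 0) \<longrightarrow>
      (\<forall>x\<in>Vspace. (\<Sum>e\<in>M. c e * (\<Prod>i<n. f i x ^ e i)) = 0) \<longrightarrow>
      (\<forall>e\<in>M. c e = (0::complex)))"

definition integral_over :: "nat \<Rightarrow> (nat \<Rightarrow> (nat \<times> nat \<Rightarrow> complex) \<Rightarrow> complex) \<Rightarrow> bool" where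
  "integral_over n f \<longleftrightarrow> (\<forall>h. invariant h \<longrightarrow>
      (\<exists>m::nat. \<exists>A. m \<ge> 1 \<and> (\<forall>j<m. A j \<in> gen_alg n f) \<and>
        (\<forall>x\<in>Vspace. h x ^ m + (\<Sum>j<m. A j x * h x ^ j) = 0)))"

definition hsop_degrees :: "nat list \<Rightarrow> (nat \<Rightarrow> (nat \<times> nat \<Rightarrow> complex) \<Rightarrow> complex) \<Rightarrow> bool" where
  "hsop_degrees ds f \<longleftrightarrow>
     (\<forall>i<length ds. invariant (f i) \<and> homog (ds ! i) (f i) \<and> ds ! i > 0) \<and>
     alg_indep (length ds) f \<and> integral_over (length ds) f"

end

theory Submission
  imports Defs "HOL-Computational_Algebra.Polynomial"
begin


lemma coords_eq: "coords = {(1,0),(1,1),(2,0),(2,1),(2,2),(3,0),(3,1),(3,2),(3,3)}"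
  unfolding coords_def by (auto simp: le_Suc_eq numeral_eq_Suc)

lemma act_eq: "act (a,b,c,d) x = (\<lambda>p.
  if p = (1,0) then x(1,0)*a + x(1,1)*c
  else if p = (1,1) then x(1,0)*b + x(1,1)*d
  else if p = (2,0) then x(2,0)*a^2 + x(2,1)*a*c + x(2,2)*c^2
  else if p = (2,1) then 2*a*b*x(2,0) + (a*d+b*c)*x(2,1) + 2*c*d*x(2,2)
  else if p = (2,2) then b^2*x(2,0) + b*d*x(2,1) + d^2*x(2,2)
  else if p = (3,0) then a^3*x(3,0) + a^2*c*x(3,1) + a*c^2*x(3,2) + c^3*x(3,3)
  else if p = (3,1) then 3*a^2*b*x(3,0) + (a^2*d + 2*a*b*c)*x(3,1) + (2*a*c*d+b*c^2)*x(3,2) + 3*c^2*d*x(3,3)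
  else if p = (3,2) then 3*a*b^2*x(3,0) + (2*a*b*d + b^2*c)*x(3,1) + (a*d^2+2*b*c*d)*x(3,2) + 3*c*d^2*x(3,3)
  else if p = (3,3) then b^3*x(3,0) + b^2*d*x(3,1) + b*d^2*x(3,2) + d^3*x(3,3)
  else 0)"
  apply (rule ext)
  apply (simp add: act_def coords_eq split: prod.splits)
  apply (auto simp: numeral_eq_Suc atMost_Suc algebra_simps power2_eq_square power3_eq_cube)
  done


definition pt :: "complex \<Rightarrow> complex \<Rightarrow> complex \<Rightarrow> complex \<Rightarrow> complex \<Rightarrow> (nat\<times>nat \<Rightarrow> complex)" where
  "pt a b0 b1 b2 b3 = (\<lambda>p. if p = (1,0) then a else if p = (3,0) then b0 else if p = (3,1) then b1
      else if p = (3,2) then b2 else if p = (3,3) then b3 else 0)"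

lemma pt_V: "pt a b0 b1 b2 b3 \<in> Vspace"
  by (auto simp: Vspace_def pt_def coords_eq)

definition zf :: "(nat\<times>nat \<Rightarrow> nat) \<Rightarrow> complex" where
  "zf e = 0^e(1,1) * 0^e(2,0) * 0^e(2,1) * 0^e(2,2)"

lemma mono_pt: "mono e (pt a b0 b1 b2 b3) = zf e * a^e(1,0) * b0^e(3,0) * b1^e(3,1) * b2^e(3,2) * b3^e(3,3)"
  by (simp add: mono_def coords_eq pt_def zf_def)

lemma mdeg_eq: "mdeg e = e(1,0) + e(1,1) + e(2,0) + e(2,1) + e(2,2) + e(3,0) + e(3,1) + e(3,2) + e(3,3)"
  by (simp add: mdeg_def coords_eq)

lemma act_pt_diag: "t \<noteq> 0 \<Longrightarrow> act (1/t, 0, 0, t) (pt t (t*b0) (t*b1) (t*b2) (t*b3)) = pt 1 (b0/t^2) b1 (t^2*b2) (t^4*b3)"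
  apply (rule ext)
  apply (simp add: act_eq pt_def)
  apply (auto simp: field_simps power2_eq_square power3_eq_cube numeral_eq_Suc)
  done

lemma act_pt_torus: "t \<noteq> 0 \<Longrightarrow> act (1/t, 0, 0, t) (pt t b0 b1 b2 b3) = pt 1 (b0/t^3) (b1/t) (t*b2) (t^3*b3)"
  apply (rule ext)
  apply (simp add: act_eq pt_def)
  apply (auto simp: field_simps power2_eq_square power3_eq_cube numeral_eq_Suc)
  done

lemma act_pt_u: "act (1, 0, c, 1) (pt 1 b0 b1 b2 b3) =
   pt 1 (b0 + c*b1 + c^2*b2 + c^3*b3) (b1 + 2*c*b2 + 3*c^2*b3) (b2 + 3*c*b3) b3"
  apply (rule ext)
  apply (simp add: act_eq pt_def)
  done

lemma scale_pt: "(\<lambda>p. t * pt a b0 b1 b2 b3 p) = pt (t*a) (t*b0) (t*b1) (t*b2) (t*b3)"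
  by (rule ext) (simp add: pt_def)

lemma Vspace_scale: "x \<in> Vspace \<Longrightarrow> (\<lambda>p. t * x p) \<in> Vspace"
  by (simp add: Vspace_def)

lemma mono_scale: "mono e (\<lambda>p. t * x p) = t ^ mdeg e * mono e x"
  by (simp add: mono_def mdeg_def power_mult_distrib prod.distrib power_sum)

lemma homog_scale:
  assumes "homog d F" "x \<in> Vspace"
  shows "F (\<lambda>p. t * x p) = t^d * F x"
proof -
  obtain M c where M: "finite M" "\<forall>e\<in>M. mdeg e = d" "\<forall>x\<in>Vspace. F x = (\<Sum>e\<in>M. c e * mono e x)"
    using assms(1) unfolding homog_def by blast
  have "F (\<lambda>p. t * x p) = (\<Sum>e\<in>M. c e * mono e (\<lambda>p. t * x p))"
    using M(3) Vspace_scale[OF assms(2)] by blast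
  also have "\<dots> = (\<Sum>e\<in>M. t^d * (c e * mono e x))"
    by (rule sum.cong) (auto simp: mono_scale M(2))
  also have "\<dots> = t^d * F x" using M(3) assms(2) by (simp add: sum_distrib_left)
  finally show ?thesis .
qed

lemma inv_act: "invariant F \<Longrightarrow> g \<in> SL2 \<Longrightarrow> x \<in> Vspace \<Longrightarrow> F (act g x) = F x"
  by (simp add: invariant_def)

lemma coeff_extract:
  fixes C :: "'a \<Rightarrow> complex"
  assumes "finite M" "\<And>t. t \<noteq> 0 \<Longrightarrow> (\<Sum>e\<in>M. C e * (t^(k e) - t^N)) = 0" "n \<noteq> N"
  shows "(\<Sum>e\<in>{e\<in>M. k e = n}. C e) = 0"
proof -
  define p where "p = (\<Sum>e\<in>M. smult (C e) (monom 1 (k e) - monom 1 N))"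
  have pe: "poly p t = (\<Sum>e\<in>M. C e * (t^(k e) - t^N))" for t
    by (simp add: p_def poly_sum poly_monom)
  have "p = 0"
  proof (rule ccontr)
    assume "p \<noteq> 0"
    then have "finite {t. poly p t = 0}" by (rule poly_roots_finite)
    moreover have "UNIV - {0} \<subseteq> {t. poly p t = 0}" using assms(2) pe by auto
    ultimately have "finite (UNIV - {0::complex})" by (rule finite_subset[rotated])
    then show False by (simp add: infinite_UNIV_char_0)
  qed
  then have "coeff p n = 0" by simp
  moreover have "coeff p n = (\<Sum>e\<in>M. if k e = n then C e else 0)"
    using assms(3) unfolding p_def coeff_sum by (intro sum.cong) auto
  ultimately show ?thesis using assms(1) by (simp add: sum.inter_filter)
qed


lemma SL2_diag: "t \<noteq> 0 \<Longrightarrow> (1/t, 0, 0, t) \<in> SL2" by (simp add: SL2_def)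
lemma SL2_u: "(1, 0, c, 1) \<in> SL2" by (simp add: SL2_def)

lemma mono_weight:
  assumes "t \<noteq> 0" "e(3,0) \<le> d"
  shows "mono e (pt 1 (b0/t^2) b1 (t^2*b2) (t^4*b3)) * t^(2*d) =
         t^(2*e(3,2) + 4*e(3,3) + 2*(d - e(3,0))) * mono e (pt 1 b0 b1 b2 b3)"
proof -
  have dd: "2*d = 2*e(3,0) + 2*(d - e(3,0))" using assms(2) by simp
  have d: "t^(2*d) = (t^2)^e(3,0) * t^(2*(d - e(3,0)))"
    by (subst dd) (simp add: power_mult[symmetric] power_add)
  have "(b0/t^2)^e(3,0) * (t^2)^e(3,0) = b0^e(3,0)"
    using assms(1) by (simp add: power_divide[symmetric] power_mult_distrib[symmetric])
  then show ?thesis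
    unfolding mono_pt d
    by (simp add: power_mult_distrib power_add power_mult algebra_simps)
qed

lemma slice:
  assumes inv: "invariant F" and hom: "homog d F"
  obtains M c where "finite M" "\<forall>e\<in>M. mdeg e = d"
    "\<And>b0 b1 b2 b3. F (pt 1 b0 b1 b2 b3) =
       (\<Sum>e\<in>{e\<in>M. 2*e(3,2) + 4*e(3,3) + 2*(d - e(3,0)) = 3*d}. c e * mono e (pt 1 b0 b1 b2 b3))"
proof -
  obtain M c where M: "finite M" "\<forall>e\<in>M. mdeg e = d" "\<forall>x\<in>Vspace. F x = (\<Sum>e\<in>M. c e * mono e x)"
    using hom unfolding homog_def by blast
  define k where "k e = 2*e(3,2) + 4*e(3,3) + 2*(d - e(3,0))" for e :: "nat\<times>nat \<Rightarrow> nat"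
  have main: "F (pt 1 b0 b1 b2 b3) = (\<Sum>e\<in>{e\<in>M. k e = 3*d}. c e * mono e (pt 1 b0 b1 b2 b3))" for b0 b1 b2 b3
  proof -
    define C where "C e = c e * mono e (pt 1 b0 b1 b2 b3)" for e
    have Z: "(\<Sum>e\<in>M. C e * (t^(k e) - t^(3*d))) = 0" if t: "t \<noteq> 0" for t
    proof -
      have "F (pt 1 (b0/t^2) b1 (t^2*b2) (t^4*b3)) = F (pt t (t*b0) (t*b1) (t*b2) (t*b3))"
        using inv_act[OF inv SL2_diag[OF t] pt_V[of t "t*b0" "t*b1" "t*b2" "t*b3"]] act_pt_diag[OF t, of b0 b1 b2 b3] by simp
      also have "\<dots> = t^d * F (pt 1 b0 b1 b2 b3)"
        using homog_scale[OF hom pt_V, of t 1 b0 b1 b2 b3] by (simp add: scale_pt)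
      finally have E: "F (pt 1 (b0/t^2) b1 (t^2*b2) (t^4*b3)) = t^d * F (pt 1 b0 b1 b2 b3)" .
      have e30: "e(3,0) \<le> d" if "e \<in> M" for e using M(2) that by (auto simp: mdeg_eq)
      have "(\<Sum>e\<in>M. C e * t^(k e)) = (\<Sum>e\<in>M. c e * (mono e (pt 1 (b0/t^2) b1 (t^2*b2) (t^4*b3)) * t^(2*d)))"
        by (rule sum.cong) (auto simp: C_def k_def mono_weight[OF t e30])
      also have "\<dots> = F (pt 1 (b0/t^2) b1 (t^2*b2) (t^4*b3)) * t^(2*d)"
        using M(3) pt_V by (simp add: sum_distrib_right mult.assoc)
      also have "\<dots> = t^(3*d) * (\<Sum>e\<in>M. C e)"
        using E M(3) pt_V by (simp add: C_def power_add[symmetric] algebra_simps)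
      finally show ?thesis by (simp add: algebra_simps sum_subtractf sum_distrib_left sum_distrib_right)
    qed
    have N: "(\<Sum>e\<in>{e\<in>M. k e = n}. C e) = 0" if "n \<noteq> 3*d" for n
      by (rule coeff_extract[OF M(1) Z that])
    have "(\<Sum>e\<in>M. C e) = (\<Sum>n\<in>insert (3*d) (k`M). (\<Sum>e\<in>{e\<in>M. k e = n}. C e))"
      using sum.group[of M "insert (3*d) (k`M)" k C] M(1) by (simp add: subset_insertI)
    also have "\<dots> = (\<Sum>n\<in>{3*d}. (\<Sum>e\<in>{e\<in>M. k e = n}. C e))"
    proof (rule sum.mono_neutral_cong_left[symmetric])
    qed (use M(1) N in auto)
    finally show ?thesis using M(3) pt_V by (simp add: C_def)
  qed
  show ?thesis using that[OF M(1,2)] main unfolding k_def by blast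
qed


definition bp :: "nat\<times>nat\<times>nat\<times>nat \<Rightarrow> complex \<Rightarrow> complex \<Rightarrow> complex \<Rightarrow> complex \<Rightarrow> complex" where
  "bp w b0 b1 b2 b3 = (case w of (i,j,k,l) \<Rightarrow> b0^i * b1^j * b2^k * b3^l)"

lemma sliceW:
  assumes inv: "invariant F" and hom: "homog d F" and fW: "finite W"
    and W: "\<And>i j k l. i+j+k+l \<le> d \<Longrightarrow> 2*k+4*l+2*(d-i) = 3*d \<Longrightarrow> (i,j,k,l) \<in> W"
  shows "\<exists>q. \<forall>b0 b1 b2 b3. F (pt 1 b0 b1 b2 b3) = (\<Sum>w\<in>W. q w * bp w b0 b1 b2 b3)"
proof -
  obtain M c where M: "finite M" "\<forall>e\<in>M. mdeg e = d"
    and F: "\<And>b0 b1 b2 b3. F (pt 1 b0 b1 b2 b3) =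
       (\<Sum>e\<in>{e\<in>M. 2*e(3,2) + 4*e(3,3) + 2*(d - e(3,0)) = 3*d}. c e * mono e (pt 1 b0 b1 b2 b3))"
    using slice[OF inv hom] by blast
  define S where "S = {e\<in>M. 2*e(3,2) + 4*e(3,3) + 2*(d - e(3,0)) = 3*d}"
  define \<tau> where "\<tau> e = (e(3,0), e(3,1), e(3,2), e(3,3))" for e :: "nat\<times>nat\<Rightarrow>nat"
  have fS: "finite S" using M(1) by (simp add: S_def)
  have tS: "\<tau> ` S \<subseteq> W"
  proof
    fix w assume "w \<in> \<tau> ` S"
    then obtain e where e: "e \<in> S" "w = \<tau> e" by blast
    then have "mdeg e = d" using M(2) by (simp add: S_def)
    then have "e(3,0)+e(3,1)+e(3,2)+e(3,3) \<le> d" by (simp add: mdeg_eq)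
    with e show "w \<in> W" using W by (simp add: S_def \<tau>_def)
  qed
  define q where "q w = (\<Sum>e\<in>{e\<in>S. \<tau> e = w}. c e * zf e)" for w
  have "F (pt 1 b0 b1 b2 b3) = (\<Sum>w\<in>W. q w * bp w b0 b1 b2 b3)" for b0 b1 b2 b3
  proof -
    have "F (pt 1 b0 b1 b2 b3) = (\<Sum>e\<in>S. (c e * zf e) * bp (\<tau> e) b0 b1 b2 b3)"
      unfolding F S_def[symmetric] by (rule sum.cong) (simp_all add: mono_pt bp_def \<tau>_def)
    also have "\<dots> = (\<Sum>w\<in>W. \<Sum>e\<in>{e\<in>S. \<tau> e = w}. (c e * zf e) * bp (\<tau> e) b0 b1 b2 b3)"
      by (rule sum.group[OF fS fW tS, symmetric])
    also have "\<dots> = (\<Sum>w\<in>W. q w * bp w b0 b1 b2 b3)"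
      unfolding q_def sum_distrib_right by (rule sum.cong) auto
    finally show ?thesis .
  qed
  then show ?thesis by blast
qed

definition Dr :: "complex \<Rightarrow> complex \<Rightarrow> complex \<Rightarrow> complex \<Rightarrow> complex" where
  "Dr b0 b1 b2 b3 = b1^2*b2^2 - 4*b0*b2^3 - 4*b1^3*b3 - 27*b0^2*b3^2 + 18*b0*b1*b2*b3"

lemma W4: "(i::nat)+j+k+(l::nat) \<le> 4 \<Longrightarrow> 2*k+4*l+2*(4-i) = 3*4 \<Longrightarrow> (i,j,k,l) \<in>
  {(0,0,0,1),(0,1,0,1),(0,2,0,1),(0,3,0,1),(1,0,1,1),(1,1,1,1),(2,0,0,2),(0,0,2,0),(0,1,2,0),(0,2,2,0),(1,0,3,0)}"
proof -
  assume a: "i+j+k+l \<le> 4" "2*k+4*l+2*(4-i) = 3*4"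
  have i4: "i \<le> 4" using a(1) by simp
  have k: "k + 2*l = 2 + i" using a(2) i4 by simp
  have "i \<le> 2" "l \<le> 2" using a(1) k by linarith+
  then have "i = 0 \<or> i = 1 \<or> i = 2" "l = 0 \<or> l = 1 \<or> l = 2" by linarith+
  then show ?thesis using a(1) k
    apply (elim disjE)
    apply (simp_all add: le_Suc_eq numeral_eq_Suc)
    done
qed

lemma W2: "(i::nat)+j+k+(l::nat) \<le> 2 \<Longrightarrow> 2*k+4*l+2*(2-i) = 3*2 \<Longrightarrow> (i,j,k,l) \<in> {(0,0,1,0),(1,0,0,1),(0,1,1,0)}"
proof -
  assume a: "i+j+k+l \<le> 2" "2*k+4*l+2*(2-i) = 3*2"
  then have k: "k + 2*l = 1 + i" by linarith
  have "l \<le> 1" "i \<le> 2" using a by linarith+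
  then have "l \<in> {0,1}" "i \<in> {0,1,2}" by auto
  then show ?thesis using a k by auto
qed

lemma Wodd: "odd (d::nat) \<Longrightarrow> 2*(k::nat)+4*l+2*(d-i) = 3*d \<Longrightarrow> (i,j,k,l) \<in> {}"
proof -
  assume a: "odd d" "2*(k::nat)+4*l+2*(d-i) = 3*d"
  then have "3*d = 2*(k+2*l+(d-i))" by simp
  then have "even (3*d)" by (metis dvd_triv_left)
  with a show ?thesis by simp
qed


lemma slice_u:
  assumes "invariant F"
  shows "F (pt 1 (b0 + c*b1 + c^2*b2 + c^3*b3) (b1 + 2*c*b2 + 3*c^2*b3) (b2 + 3*c*b3) b3) = F (pt 1 b0 b1 b2 b3)"
  using inv_act[OF assms SL2_u pt_V, of c 1 b0 b1 b2 b3] act_pt_u[of c b0 b1 b2 b3] by simp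

lemma deg4_slice:
  assumes inv: "invariant F" and hom: "homog 4 F"
  shows "\<exists>qJ qK qD. \<forall>b0 b1 b2 b3. F (pt 1 b0 b1 b2 b3) = qJ*b3 + qK*(3*b1*b3 - b2^2) + qD * Dr b0 b1 b2 b3"
proof -
  obtain q where q: "\<And>b0 b1 b2 b3. F (pt 1 b0 b1 b2 b3) = (\<Sum>w\<in>{(0,0,0,1),(0,1,0,1),(0,2,0,1),(0,3,0,1),(1,0,1,1),(1,1,1,1),(2,0,0,2),(0,0,2,0),(0,1,2,0),(0,2,2,0),(1,0,3,0)}. q w * bp w b0 b1 b2 b3)"
    using sliceW[OF inv hom _ W4] by auto
  define q1 where "q1 = q (0,0,0,1)"
  define q2 where "q2 = q (0,1,0,1)"
  define q3 where "q3 = q (0,2,0,1)"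
  define q4 where "q4 = q (0,3,0,1)"
  define q5 where "q5 = q (1,0,1,1)"
  define q6 where "q6 = q (1,1,1,1)"
  define q7 where "q7 = q (2,0,0,2)"
  define q8 where "q8 = q (0,0,2,0)"
  define q9 where "q9 = q (0,1,2,0)"
  define q10 where "q10 = q (0,2,2,0)"
  define q11 where "q11 = q (1,0,3,0)"
  have E: "F (pt 1 b0 b1 b2 b3) = q1*b3 + q2*b1*b3 + q3*b1^2*b3 + q4*b1^3*b3 + q5*b0*b2*b3 + q6*b0*b1*b2*b3
     + q7*b0^2*b3^2 + q8*b2^2 + q9*b1*b2^2 + q10*b1^2*b2^2 + q11*b0*b2^3" for b0 b1 b2 b3
    unfolding q by (simp add: bp_def q1_def q2_def q3_def q4_def q5_def q6_def q7_def q8_def q9_def q10_def q11_def algebra_simps)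
  note U = slice_u[OF inv, unfolded E]
  have e1: "(-2)*q9 = 0" using slice_u[OF inv, of 0 "-1" 1 1 0, unfolded E] by (simp add: algebra_simps)
  have e2: "2*q9 + 4*q10 + 1*q11 = 0" using slice_u[OF inv, of 0 "1" 0 1 0, unfolded E] by (simp add: algebra_simps)
  have e3: "1*q2 + 1*q3 + 1*q4 + 3*q8 + 4*q9 + 4*q10 = 0" using slice_u[OF inv, of 0 "-1" 0 1 1, unfolded E] by (simp add: algebra_simps)
  have e4: "3*q2 + 9*q3 + 27*q4 + (-1)*q7 + 9*q8 + 27*q9 + 81*q10 = 0" using slice_u[OF inv, of 1 "-1" 0 0 1, unfolded E] by (simp add: algebra_simps)
  have e5: "1*q2 + 1*q3 + 1*q4 + (-3)*q5 + (-2)*q6 + 3*q8 + 4*q9 + 4*q10 + (-9)*q11 = 0" using slice_u[OF inv, of 1 "-1" 0 1 1, unfolded E] by (simp add: algebra_simps)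
  have e6: "3*q2 + 15*q3 + 63*q4 + 3*q5 + 12*q6 + 9*q8 + 36*q9 + 144*q10 + 27*q11 = 0" using slice_u[OF inv, of 1 "-1" 1 0 1, unfolded E] by (simp add: algebra_simps)
  have e7: "3*q2 + 9*q3 + 27*q4 + 3*q5 + 9*q6 + 1*q7 + 9*q8 + 27*q9 + 81*q10 + 27*q11 = 0" using slice_u[OF inv, of 0 "1" 0 0 1, unfolded E] by (simp add: algebra_simps)
  have e8: "5*q2 + 25*q3 + 125*q4 + 8*q5 + 40*q6 + 4*q7 + 15*q8 + 80*q9 + 400*q10 + 128*q11 = 0" using slice_u[OF inv, of 0 "1" 0 1 1, unfolded E] by (simp add: algebra_simps)
  have r_q3: "q3 = 0"
  proof -
    have "36*(1*q3) = (372)*((-2)*q9) + (516)*(2*q9 + 4*q10 + 1*q11) + (3)*(1*q2 + 1*q3 + 1*q4 + 3*q8 + 4*q9 + 4*q10) + (-40)*(3*q2 + 9*q3 + 27*q4 + (-1)*q7 + 9*q8 + 27*q9 + 81*q10) + (18)*(1*q2 + 1*q3 + 1*q4 + (-3)*q5 + (-2)*q6 + 3*q8 + 4*q9 + 4*q10 + (-9)*q11) + (38)*(3*q2 + 15*q3 + 63*q4 + 3*q5 + 12*q6 + 9*q8 + 36*q9 + 144*q10 + 27*q11) + (20)*(3*q2 + 9*q3 + 27*q4 + 3*q5 + 9*q6 + 1*q7 + 9*q8 + 27*q9 + 81*q10 + 27*q11) + (-15)*(5*q2 + 25*q3 + 125*q4 + 8*q5 + 40*q6 + 4*q7 + 15*q8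 + 80*q9 + 400*q10 + 128*q11)" by (simp add: algebra_simps)
    also have "\<dots> = 0" unfolding e1 e2 e3 e4 e5 e6 e7 e8 by simp
    finally have "36*(1*q3) = 0" .
    then show ?thesis by (simp only: mult_eq_0_iff) (simp add: algebra_simps)
  qed
  have r_q5: "q5 = 0"
  proof -
    have "9*(1*q5) = (-165)*((-2)*q9) + (-255)*(2*q9 + 4*q10 + 1*q11) + (-21)*(1*q2 + 1*q3 + 1*q4 + 3*q8 + 4*q9 + 4*q10) + (22)*(3*q2 + 9*q3 + 27*q4 + (-1)*q7 + 9*q8 + 27*q9 + 81*q10) + (-9)*(1*q2 + 1*q3 + 1*q4 + (-3)*q5 + (-2)*q6 + 3*q8 + 4*q9 + 4*q10 + (-9)*q11) + (-20)*(3*q2 + 15*q3 + 63*q4 + 3*q5 + 12*q6 + 9*q8 + 36*q9 + 144*q10 + 27*q11) + (-2)*(3*q2 + 9*q3 + 27*q4 + 3*q5 + 9*q6 + 1*q7 + 9*q8 + 27*q9 + 81*q10 + 27*q11) + (6)*(5*q2 + 25*q3 + 125*q4 + 8*q5 + 40*q6 + 4*q7 + 15*q8 + 80*q9 + 400*q10 + 128*q11)" by (simp add: algebra_simps)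
    also have "\<dots> = 0" unfolding e1 e2 e3 e4 e5 e6 e7 e8 by simp
    finally have "9*(1*q5) = 0" .
    then show ?thesis by (simp only: mult_eq_0_iff) (simp add: algebra_simps)
  qed
  have r_q8: "3*q8 + q2 = 0"
  proof -
    have "36*(1*q2 + 3*q8) = (-84)*((-2)*q9) + (-174)*(2*q9 + 4*q10 + 1*q11) + (60)*(1*q2 + 1*q3 + 1*q4 + 3*q8 + 4*q9 + 4*q10) + (10)*(3*q2 + 9*q3 + 27*q4 + (-1)*q7 + 9*q8 + 27*q9 + 81*q10) + (-9)*(1*q2 + 1*q3 + 1*q4 + (-3)*q5 + (-2)*q6 + 3*q8 + 4*q9 + 4*q10 + (-9)*q11) + (-11)*(3*q2 + 15*q3 + 63*q4 + 3*q5 + 12*q6 + 9*q8 + 36*q9 + 144*q10 + 27*q11) + (-14)*(3*q2 + 9*q3 + 27*q4 + 3*q5 + 9*q6 + 1*q7 + 9*q8 + 27*q9 + 81*q10 + 27*q11) + (6)*(5*q2 + 25*q3 + 125*q4 + 8*q5 + 40*q6 + 4*q7 + 15*q8 + 80*q9 + 400*q10 + 128*q11)" by (simp add: algebra_simps)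
    also have "\<dots> = 0" unfolding e1 e2 e3 e4 e5 e6 e7 e8 by simp
    finally have "36*(1*q2 + 3*q8) = 0" .
    then show ?thesis by (simp only: mult_eq_0_iff) (simp add: algebra_simps)
  qed
  have r_q6: "q6 - 18*q10 = 0"
  proof -
    have "3*(1*q6 + (-18)*q10) = (69)*((-2)*q9) + (114)*(2*q9 + 4*q10 + 1*q11) + (12)*(1*q2 + 1*q3 + 1*q4 + 3*q8 + 4*q9 + 4*q10) + (-11)*(3*q2 + 9*q3 + 27*q4 + (-1)*q7 + 9*q8 + 27*q9 + 81*q10) + (3)*(1*q2 + 1*q3 + 1*q4 + (-3)*q5 + (-2)*q6 + 3*q8 + 4*q9 + 4*q10 + (-9)*q11) + (10)*(3*q2 + 15*q3 + 63*q4 + 3*q5 + 12*q6 + 9*q8 + 36*q9 + 144*q10 + 27*q11) + (1)*(3*q2 + 9*q3 + 27*q4 + 3*q5 + 9*q6 + 1*q7 + 9*q8 + 27*q9 + 81*q10 + 27*q11) + (-3)*(5*q2 + 25*q3 + 125*q4 + 8*q5 + 40*q6 + 4*q7 + 15*q8 + 80*q9 + 400*q10 + 128*q11)" by (simp add: algebra_simps)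
    also have "\<dots> = 0" unfolding e1 e2 e3 e4 e5 e6 e7 e8 by simp
    finally have "3*(1*q6 + (-18)*q10) = 0" .
    then show ?thesis by (simp only: mult_eq_0_iff) (simp add: algebra_simps)
  qed
  have r_q7: "q7 + 27*q10 = 0"
  proof -
    have "6*(1*q7 + 27*q10) = (-537)*((-2)*q9) + (-852)*(2*q9 + 4*q10 + 1*q11) + (-87)*(1*q2 + 1*q3 + 1*q4 + 3*q8 + 4*q9 + 4*q10) + (74)*(3*q2 + 9*q3 + 27*q4 + (-1)*q7 + 9*q8 + 27*q9 + 81*q10) + (-18)*(1*q2 + 1*q3 + 1*q4 + (-3)*q5 + (-2)*q6 + 3*q8 + 4*q9 + 4*q10 + (-9)*q11) + (-70)*(3*q2 + 15*q3 + 63*q4 + 3*q5 + 12*q6 + 9*q8 + 36*q9 + 144*q10 + 27*q11) + (-4)*(3*q2 + 9*q3 + 27*q4 + 3*q5 + 9*q6 + 1*q7 + 9*q8 + 27*q9 + 81*q10 + 27*q11) + (21)*(5*q2 + 25*q3 + 125*q4 + 8*q5 + 40*q6 + 4*q7 + 15*q8 + 80*q9 + 400*q10 + 128*q11)" by (simp add: algebra_simps)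
    also have "\<dots> = 0" unfolding e1 e2 e3 e4 e5 e6 e7 e8 by simp
    finally have "6*(1*q7 + 27*q10) = 0" .
    then show ?thesis by (simp only: mult_eq_0_iff) (simp add: algebra_simps)
  qed
  have r_q4: "q4 + 4*q10 = 0"
  proof -
    have "12*(1*q4 + 4*q10) = (-72)*((-2)*q9) + (-114)*(2*q9 + 4*q10 + 1*q11) + (-9)*(1*q2 + 1*q3 + 1*q4 + 3*q8 + 4*q9 + 4*q10) + (10)*(3*q2 + 9*q3 + 27*q4 + (-1)*q7 + 9*q8 + 27*q9 + 81*q10) + (-3)*(1*q2 + 1*q3 + 1*q4 + (-3)*q5 + (-2)*q6 + 3*q8 + 4*q9 + 4*q10 + (-9)*q11) + (-9)*(3*q2 + 15*q3 + 63*q4 + 3*q5 + 12*q6 + 9*q8 + 36*q9 + 144*q10 + 27*q11) + (-2)*(3*q2 + 9*q3 + 27*q4 + 3*q5 + 9*q6 + 1*q7 + 9*q8 + 27*q9 + 81*q10 + 27*q11) + (3)*(5*q2 + 25*q3 + 125*q4 + 8*q5 + 40*q6 + 4*q7 + 15*q8 + 80*q9 + 400*q10 + 128*q11)" by (simp add: algebra_simps)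
    also have "\<dots> = 0" unfolding e1 e2 e3 e4 e5 e6 e7 e8 by simp
    finally have "12*(1*q4 + 4*q10) = 0" .
    then show ?thesis by (simp only: mult_eq_0_iff) (simp add: algebra_simps)
  qed
  have s9: "q9 = 0" using e1 by simp
  have s11: "q11 = -4*q10" using e2 s9 by (simp add: add_eq_0_iff)
  have s8: "q8 = -q2/3" using r_q8 by (simp add: field_simps add_eq_0_iff)
  have s6: "q6 = 18*q10" using r_q6 by simp
  have s7: "q7 = -27*q10" using r_q7 by (simp add: add_eq_0_iff)
  have s4: "q4 = -4*q10" using r_q4 by (simp add: add_eq_0_iff)
  show ?thesis
  proof (intro exI allI)
    fix b0 b1 b2 b3
    show "F (pt 1 b0 b1 b2 b3) = q1*b3 + (q2/3)*(3*b1*b3 - b2^2) + q10 * Dr b0 b1 b2 b3"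
      unfolding E s9 s11 s8 s6 s7 s4 r_q3 r_q5 Dr_def by (simp add: algebra_simps)
  qed
qed


lemma pt_torus: "invariant F \<Longrightarrow> t \<noteq> 0 \<Longrightarrow> F (pt t b0 b1 b2 b3) = F (pt 1 (b0/t^3) (b1/t) (t*b2) (t^3*b3))"
  using inv_act[OF _ SL2_diag pt_V, of F t t b0 b1 b2 b3] act_pt_torus[of t b0 b1 b2 b3] by simp

lemma cont_pt:
  assumes "homog d F"
  shows "isCont (\<lambda>t. F (pt t b0 b1 b2 b3)) x"
proof -
  obtain M c where M: "finite M" "\<forall>x\<in>Vspace. F x = (\<Sum>e\<in>M. c e * mono e x)"
    using assms unfolding homog_def by blast
  have "(\<lambda>t. F (pt t b0 b1 b2 b3)) = (\<lambda>t. \<Sum>e\<in>M. c e * (zf e * t^e(1,0) * b0^e(3,0) * b1^e(3,1) * b2^e(3,2) * b3^e(3,3)))"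
    using M(2) pt_V by (simp add: mono_pt)
  moreover have "isCont (\<lambda>t. \<Sum>e\<in>M. c e * (zf e * t^e(1,0) * b0^e(3,0) * b1^e(3,1) * b2^e(3,2) * b3^e(3,3))) x"
    by (intro continuous_intros)
  ultimately show ?thesis by simp
qed

lemma limit0:
  assumes "homog d F" "\<And>t. t \<noteq> 0 \<Longrightarrow> F (pt t b0 b1 b2 b3) = g t" "isCont g 0"
  shows "F (pt 0 b0 b1 b2 b3) = g 0"
proof -
  let ?h = "\<lambda>t. F (pt t b0 b1 b2 b3)"
  have h: "(?h \<longlongrightarrow> ?h 0) (at 0)" using cont_pt[OF assms(1)] by (simp add: isCont_def)
  have g: "(g \<longlongrightarrow> g 0) (at 0)" using assms(3) by (simp add: isCont_def)
  have ev: "eventually (\<lambda>t. g t = ?h t) (at (0::complex))"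
    using assms(2) by (auto simp: eventually_at_filter)
  have "(?h \<longlongrightarrow> g 0) (at 0)" using tendsto_cong[OF ev] g by simp
  then show ?thesis using h tendsto_unique[OF at_neq_bot] by blast
qed

lemma deg4:
  assumes inv: "invariant F" and hom: "homog 4 F"
  shows "\<exists>qJ qK qD. (\<forall>b0 b1 b2 b3. F (pt 1 b0 b1 b2 b3) = qJ*b3 + qK*(3*b1*b3 - b2^2) + qD * Dr b0 b1 b2 b3)
     \<and> (\<forall>b0 b1 b2 b3. F (pt 0 b0 b1 b2 b3) = qD * Dr b0 b1 b2 b3)"
proof -
  obtain qJ qK qD where Q: "\<And>b0 b1 b2 b3. F (pt 1 b0 b1 b2 b3) = qJ*b3 + qK*(3*b1*b3 - b2^2) + qD * Dr b0 b1 b2 b3"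
    using deg4_slice[OF inv hom] by blast
  have "F (pt 0 b0 b1 b2 b3) = qD * Dr b0 b1 b2 b3" for b0 b1 b2 b3
  proof -
    let ?g = "\<lambda>t. qJ*(t^3*b3) + qK*(3*t^2*b1*b3 - t^2*b2^2) + qD * Dr b0 b1 b2 b3"
    have "F (pt 0 b0 b1 b2 b3) = ?g 0"
    proof (rule limit0[OF hom])
      fix t :: complex assume t: "t \<noteq> 0"
      show "F (pt t b0 b1 b2 b3) = ?g t"
        unfolding pt_torus[OF inv t] Q using t
        by (simp add: Dr_def field_simps power2_eq_square power3_eq_cube)
    next
      show "isCont ?g 0" by (intro continuous_intros)
    qed
    then show ?thesis by simp
  qed
  with Q show ?thesis by blast
qed

lemma vanish_of_slice:
  assumes inv: "invariant F" and hom: "homog d F" and Z: "\<And>b0 b1 b2 b3. F (pt 1 b0 b1 b2 b3) = 0"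
  shows "F (pt 1 b0 b1 b2 b3) = 0 \<and> F (pt 0 b0 b1 b2 b3) = 0"
proof
  show "F (pt 1 b0 b1 b2 b3) = 0" by (rule Z)
  have "F (pt 0 b0 b1 b2 b3) = (\<lambda>t. 0) 0"
    by (rule limit0[OF hom]) (use pt_torus[OF inv] Z in auto)
  then show "F (pt 0 b0 b1 b2 b3) = 0" by simp
qed

lemma deg_odd:
  assumes inv: "invariant F" and hom: "homog d F" and "odd d"
  shows "F (pt 1 b0 b1 b2 b3) = 0 \<and> F (pt 0 b0 b1 b2 b3) = 0"
proof (rule vanish_of_slice[OF inv hom])
  fix b0 b1 b2 b3
  obtain q where "\<forall>b0 b1 b2 b3. F (pt 1 b0 b1 b2 b3) = (\<Sum>w\<in>{}. q w * bp w b0 b1 b2 b3)"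
    using sliceW[OF inv hom _ Wodd[OF assms(3)]] by auto
  then show "F (pt 1 b0 b1 b2 b3) = 0" by simp
qed

lemma deg2:
  assumes inv: "invariant F" and hom: "homog 2 F"
  shows "F (pt 1 b0 b1 b2 b3) = 0 \<and> F (pt 0 b0 b1 b2 b3) = 0"
proof (rule vanish_of_slice[OF inv hom])
  fix b0 b1 b2 b3
  obtain q where q: "\<And>b0 b1 b2 b3. F (pt 1 b0 b1 b2 b3) = (\<Sum>w\<in>{(0,0,1,0),(1,0,0,1),(0,1,1,0)}. q w * bp w b0 b1 b2 b3)"
    using sliceW[OF inv hom _ W2] by auto
  define p1 where "p1 = q (0,0,1,0)"
  define p2 where "p2 = q (1,0,0,1)"
  define p3 where "p3 = q (0,1,1,0)"
  have E: "F (pt 1 b0 b1 b2 b3) = p1*b2 + p2*b0*b3 + p3*b1*b2" for b0 b1 b2 b3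
    unfolding q by (simp add: bp_def p1_def p2_def p3_def algebra_simps)
  have ea: "3*p1 + p2 + 9*p3 = 0" using slice_u[OF inv, of 0 1 0 0 1, unfolded E] by (simp add: algebra_simps)
  have eb: "3*p1 + 2*p2 + 12*p3 = 0" using slice_u[OF inv, of 0 1 1 0 1, unfolded E] by (simp add: algebra_simps)
  have ec: "6*p1 + 8*p2 + 72*p3 = 0" using slice_u[OF inv, of 0 2 0 0 1, unfolded E] by (simp add: algebra_simps)
  have "36*p3 = (6*p1 + 8*p2 + 72*p3) + 4*(3*p1 + p2 + 9*p3) - 6*(3*p1 + 2*p2 + 12*p3)"
    by (simp add: algebra_simps)
  then have p3: "p3 = 0" unfolding ea eb ec by simp
  have "p2 = (3*p1 + 2*p2 + 12*p3) - (3*p1 + p2 + 9*p3) - 3*p3" by (simp add: algebra_simps)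
  then have p2: "p2 = 0" unfolding ea eb using p3 by simp
  have p1: "p1 = 0" using ea p2 p3 by simp
  show "F (pt 1 b0 b1 b2 b3) = 0" unfolding E p1 p2 p3 by simp
qed



lemma finite_coords: "finite coords" by (simp add: coords_eq)

lemma pf_const: "poly_fun (\<lambda>x. k)"
  unfolding poly_fun_def
  by (rule exI[of _ "{\<lambda>_. 0}"], rule exI[of _ "\<lambda>_. k"]) (simp add: mono_def)

lemma pf_coord: "p \<in> coords \<Longrightarrow> poly_fun (\<lambda>x. x p)"
  unfolding poly_fun_def
proof (rule exI[of _ "{\<lambda>q. if q = p then 1 else 0}"], rule exI[of _ "\<lambda>_. 1"], intro conjI ballI)
  assume p: "p \<in> coords"
  fix x :: "nat\<times>nat \<Rightarrow> complex"
  have "mono (\<lambda>q. if q = p then 1 else 0) x = (\<Prod>q\<in>coords. if q = p then x q else 1)"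
    unfolding mono_def by (rule prod.cong) auto
  also have "\<dots> = x p" using p by (simp add: prod.delta' finite_coords)
  finally show "x p = (\<Sum>e\<in>{\<lambda>q. if q = p then 1 else 0}. 1 * mono e x)" by simp
qed simp

lemma pf_add:
  assumes "poly_fun F" "poly_fun G" shows "poly_fun (\<lambda>x. F x + G x)"
proof -
  obtain M1 c1 where 1: "finite M1" "\<forall>x\<in>Vspace. F x = (\<Sum>e\<in>M1. c1 e * mono e x)"
    using assms(1) unfolding poly_fun_def by blast
  obtain M2 c2 where 2: "finite M2" "\<forall>x\<in>Vspace. G x = (\<Sum>e\<in>M2. c2 e * mono e x)"
    using assms(2) unfolding poly_fun_def by blast
  define c where "c e = (if e \<in> M1 then c1 e else 0) + (if e \<in> M2 then c2 e else 0)" for e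
  have "F x + G x = (\<Sum>e\<in>M1 \<union> M2. c e * mono e x)" if "x \<in> Vspace" for x
  proof -
    have "(\<Sum>e\<in>M1 \<union> M2. c e * mono e x) =
      (\<Sum>e\<in>M1 \<union> M2. (if e \<in> M1 then c1 e * mono e x else 0)) + (\<Sum>e\<in>M1 \<union> M2. (if e \<in> M2 then c2 e * mono e x else 0))"
      by (subst sum.distrib[symmetric], rule sum.cong) (auto simp: c_def algebra_simps)
    also have "\<dots> = (\<Sum>e\<in>M1. c1 e * mono e x) + (\<Sum>e\<in>M2. c2 e * mono e x)"
      using 1(1) 2(1) by (simp add: sum.If_cases Int_absorb1 Int_absorb2)
    finally show ?thesis using 1(2) 2(2) that by simp
  qed
  then show ?thesis unfolding poly_fun_def using 1(1) 2(1) by blast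
qed

lemma mono_add: "mono (\<lambda>q. e1 q + e2 q) x = mono e1 x * mono e2 x"
  by (simp add: mono_def power_add prod.distrib)

lemma pf_mult:
  assumes "poly_fun F" "poly_fun G" shows "poly_fun (\<lambda>x. F x * G x)"
proof -
  obtain M1 c1 where 1: "finite M1" "\<forall>x\<in>Vspace. F x = (\<Sum>e\<in>M1. c1 e * mono e x)"
    using assms(1) unfolding poly_fun_def by blast
  obtain M2 c2 where 2: "finite M2" "\<forall>x\<in>Vspace. G x = (\<Sum>e\<in>M2. c2 e * mono e x)"
    using assms(2) unfolding poly_fun_def by blast
  define g where "g = (\<lambda>(e1::nat\<times>nat\<Rightarrow>nat, e2::nat\<times>nat\<Rightarrow>nat). (\<lambda>q. e1 q + e2 q))"
  define S where "S = M1 \<times> M2"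
  have fS: "finite S" using 1(1) 2(1) by (simp add: S_def)
  define c where "c f = (\<Sum>p\<in>{p\<in>S. g p = f}. c1 (fst p) * c2 (snd p))" for f
  have "F x * G x = (\<Sum>f\<in>g ` S. c f * mono f x)" if "x \<in> Vspace" for x
  proof -
    have "F x * G x = (\<Sum>p\<in>S. c1 (fst p) * c2 (snd p) * mono (g p) x)"
      using 1(2) 2(2) that unfolding S_def
      by (simp add: sum_product sum.cartesian_product) (rule sum.cong, auto simp: g_def mono_add algebra_simps)
    also have "\<dots> = (\<Sum>f\<in>g ` S. \<Sum>p\<in>{p\<in>S. g p = f}. c1 (fst p) * c2 (snd p) * mono (g p) x)"
      by (rule sum.group[OF fS finite_imageI[OF fS] subset_refl, symmetric])
    also have "\<dots> = (\<Sum>f\<in>g ` S. c f * mono f x)"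
      unfolding c_def sum_distrib_right by (rule sum.cong) auto
    finally show ?thesis .
  qed
  then show ?thesis unfolding poly_fun_def using fS by blast
qed

lemma pf_minus: "poly_fun F \<Longrightarrow> poly_fun G \<Longrightarrow> poly_fun (\<lambda>x. F x - G x)"
proof -
  assume "poly_fun F" "poly_fun G"
  then have "poly_fun (\<lambda>x. F x + (-1) * G x)" by (intro pf_add pf_mult pf_const)
  then show ?thesis by simp
qed

lemma pf_power: "poly_fun F \<Longrightarrow> poly_fun (\<lambda>x. F x ^ n)"
  by (induction n) (simp_all add: pf_const pf_mult)

lemmas pf_intros = pf_const pf_coord pf_add pf_mult pf_minus pf_power



definition Jf :: "(nat\<times>nat \<Rightarrow> complex) \<Rightarrow> complex" where
  "Jf x = x(3,0)*x(1,1)^3 - x(3,1)*x(1,1)^2*x(1,0) + x(3,2)*x(1,1)*x(1,0)^2 - x(3,3)*x(1,0)^3"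
definition Kf :: "(nat\<times>nat \<Rightarrow> complex) \<Rightarrow> complex" where
  "Kf x = (3*x(3,0)*x(3,2) - x(3,1)^2)*x(1,1)^2 - (9*x(3,0)*x(3,3) - x(3,1)*x(3,2))*x(1,1)*x(1,0)
        + (3*x(3,1)*x(3,3) - x(3,2)^2)*x(1,0)^2"
definition Df :: "(nat\<times>nat \<Rightarrow> complex) \<Rightarrow> complex" where
  "Df x = Dr (x(3,0)) (x(3,1)) (x(3,2)) (x(3,3))"

lemma Jf_act: "Jf (act (a,b,c,d) x) = (a*d-b*c)^3 * Jf x"
  unfolding Jf_def act_eq by simp algebra

lemma Kf_act: "Kf (act (a,b,c,d) x) = (a*d-b*c)^4 * Kf x"
  unfolding Kf_def act_eq by simp algebra

lemma Df_act: "Df (act (a,b,c,d) x) = (a*d-b*c)^6 * Df x"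
  unfolding Df_def Dr_def act_eq by simp algebra


lemma SL2_det: "(a,b,c,d) \<in> SL2 \<Longrightarrow> a*d - b*c = 1" by (simp add: SL2_def)

lemma inv_J: "invariant Jf"
  unfolding invariant_def
proof (intro conjI ballI)
  show "poly_fun Jf" unfolding Jf_def by (intro pf_intros) (simp_all add: coords_eq)
  fix g x assume "g \<in> SL2" then show "Jf (act g x) = Jf x"
    by (cases g) (auto simp: Jf_act dest!: SL2_det)
qed

lemma inv_K: "invariant Kf"
  unfolding invariant_def
proof (intro conjI ballI)
  show "poly_fun Kf" unfolding Kf_def by (intro pf_intros) (simp_all add: coords_eq)
  fix g x assume "g \<in> SL2" then show "Kf (act g x) = Kf x"
    by (cases g) (auto simp: Kf_act dest!: SL2_det)
qed

lemma inv_D: "invariant Df"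
  unfolding invariant_def
proof (intro conjI ballI)
  show "poly_fun Df" unfolding Df_def Dr_def by (intro pf_intros) (simp_all add: coords_eq)
  fix g x assume "g \<in> SL2" then show "Df (act g x) = Df x"
    by (cases g) (auto simp: Df_act dest!: SL2_det)
qed

lemma J_scale: "Jf (\<lambda>p. t * x p) = t^4 * Jf x" unfolding Jf_def by algebra
lemma K_scale: "Kf (\<lambda>p. t * x p) = t^4 * Kf x" unfolding Kf_def by algebra
lemma D_scale: "Df (\<lambda>p. t * x p) = t^4 * Df x" unfolding Df_def Dr_def by algebra

lemma J_pt: "Jf (pt 1 b0 b1 b2 b3) = -b3" by (simp add: Jf_def pt_def)
lemma K_pt: "Kf (pt 1 b0 b1 b2 b3) = 3*b1*b3 - b2^2" by (simp add: Kf_def pt_def)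
lemma D_pt: "Df (pt a b0 b1 b2 b3) = Dr b0 b1 b2 b3" by (simp add: Df_def pt_def)


lemma monic_finite_roots:
  fixes \<alpha> :: "nat \<Rightarrow> complex"
  shows "finite {z. z^m + (\<Sum>j<m. \<alpha> j * z^j) = 0}"
proof -
  define p where "p = monom 1 m + (\<Sum>j<m. monom (\<alpha> j) j)"
  have pe: "poly p z = z^m + (\<Sum>j<m. \<alpha> j * z^j)" for z
    by (simp add: p_def poly_sum poly_monom)
  have "coeff p m = 1" by (simp add: p_def coeff_sum)
  then have "p \<noteq> 0" by auto
  then have "finite {z. poly p z = 0}" by (rule poly_roots_finite)
  then show ?thesis by (simp add: pe)
qed

lemma no_common_zero:
  assumes hs: "hsop_degrees ds f" and x: "x \<in> Vspace" and z: "\<forall>i<length ds. f i x = 0"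
    and h: "invariant h" "h x \<noteq> 0" "\<And>t. h (\<lambda>p. t * x p) = t^D * h x" "D > 0"
  shows False
proof -
  let ?n = "length ds"
  obtain m A where mA: "m \<ge> 1" "\<forall>j<m. A j \<in> gen_alg ?n f"
      "\<forall>y\<in>Vspace. h y ^ m + (\<Sum>j<m. A j y * h y ^ j) = 0"
    using hs h(1) unfolding hsop_degrees_def integral_over_def by blast
  have fz: "f i (\<lambda>p. t * x p) = 0" if "i < ?n" for i t
  proof -
    have "homog (ds!i) (f i)" using hs that unfolding hsop_degrees_def by blast
    then show ?thesis using homog_scale[OF _ x, of "ds!i" "f i" t] z that by simp
  qed
  have "\<forall>j<m. \<exists>a. \<forall>t. A j (\<lambda>p. t * x p) = a"
  proof (intro allI impI)
    fix j assume "j < m"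
    then obtain M c where Mc: "\<forall>y\<in>Vspace. A j y = (\<Sum>e\<in>M. c e * (\<Prod>i<?n. f i y ^ e i))"
      using mA(2) unfolding gen_alg_def by blast
    show "\<exists>a. \<forall>t. A j (\<lambda>p. t * x p) = a"
      by (rule exI[of _ "\<Sum>e\<in>M. c e * (\<Prod>i<?n. (0::complex) ^ e i)"])
         (simp add: Mc Vspace_scale[OF x] fz)
  qed
  then obtain \<alpha> where \<alpha>: "\<And>j t. j < m \<Longrightarrow> A j (\<lambda>p. t * x p) = \<alpha> j" by metis
  have root: "(t^D * h x)^m + (\<Sum>j<m. \<alpha> j * (t^D * h x)^j) = 0" for t
  proof -
    have "h (\<lambda>p. t * x p) ^ m + (\<Sum>j<m. A j (\<lambda>p. t * x p) * h (\<lambda>p. t * x p) ^ j) = 0"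
      using mA(3) Vspace_scale[OF x] by blast
    then show ?thesis by (simp add: h(3) \<alpha>)
  qed
  define g where "g n = (of_nat (n::nat))^D * h x" for n
  have "inj g"
  proof (rule injI)
    fix a b assume "g a = g b"
    then have "(of_nat a :: complex)^D = of_nat b ^D" using h(2) by (simp add: g_def)
    then have "a^D = b^D" by (metis of_nat_eq_iff of_nat_power)
    then show "a = b" using h(4) by (simp add: power_eq_iff_eq_base)
  qed
  then have "infinite (range g)" by (rule range_inj_infinite)
  moreover have "range g \<subseteq> {z. z^m + (\<Sum>j<m. \<alpha> j * z^j) = 0}"
    using root by (auto simp: g_def)
  ultimately show False using monic_finite_roots finite_subset by blast
qed

lemma kernel3:
  fixes a1 a2 a3 b1 b2 b3 :: complex
  shows "\<exists>u v w. (u \<noteq> 0 \<or> v \<noteq> 0 \<or> w \<noteq> 0) \<and> a1*u + a2*v + a3*w = 0 \<and> b1*u + b2*v + b3*w = 0"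
proof -
  define c1 where "c1 = a2*b3 - a3*b2"
  define c2 where "c2 = a3*b1 - a1*b3"
  define c3 where "c3 = a1*b2 - a2*b1"
  show ?thesis
  proof (cases "c1 \<noteq> 0 \<or> c2 \<noteq> 0 \<or> c3 \<noteq> 0")
    case True
    then show ?thesis
      by (intro exI[of _ c1] exI[of _ c2] exI[of _ c3]) (auto simp: c1_def c2_def c3_def algebra_simps)
  next
    case False
    then have c: "c1 = 0" "c2 = 0" "c3 = 0" by auto
    show ?thesis
    proof (cases "a1 \<noteq> 0 \<or> a2 \<noteq> 0")
      case True
      then show ?thesis using c(3)
        by (intro exI[of _ a2] exI[of _ "-a1"] exI[of _ 0]) (auto simp: c3_def algebra_simps)
    next
      case F: False
      show ?thesis
      proof (cases "a3 = 0")
        case False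
        then have "b1 = 0" using c(2) F by (simp add: c2_def)
        then show ?thesis using F
          by (intro exI[of _ 1] exI[of _ 0] exI[of _ 0]) auto
      next
        case True
        show ?thesis
        proof (cases "b1 \<noteq> 0 \<or> b2 \<noteq> 0")
          case True
          then show ?thesis using F \<open>a3 = 0\<close>
            by (intro exI[of _ b2] exI[of _ "-b1"] exI[of _ 0]) (auto simp: algebra_simps)
        next
          case False
          then show ?thesis using F \<open>a3 = 0\<close>
            by (intro exI[of _ 1] exI[of _ 0] exI[of _ 0]) auto
        qed
      qed
    qed
  qed
qed


theorem mainTheorem7:
  shows "\<not> (\<exists>f. hsop_degrees [2, 3, 3, 4, 4, 5] f)"
proof
  assume "\<exists>f. hsop_degrees [2, 3, 3, 4, 4, 5] f"
  then obtain f where hs: "hsop_degrees [2, 3, 3, 4, 4, 5] f" by blast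
  have ih: "invariant (f i) \<and> homog ([2, 3, 3, 4, 4, 5]!i) (f i)" if "i < 6" for i
    using hs that unfolding hsop_degrees_def by auto
  have i0: "invariant (f 0)" "homog 2 (f 0)" using ih[of 0] by simp_all
  have i1: "invariant (f 1)" "homog 3 (f 1)" using ih[of 1] by simp_all
  have i2: "invariant (f 2)" "homog 3 (f 2)" using ih[of 2] by simp_all
  have i3: "invariant (f 3)" "homog 4 (f 3)" using ih[of 3] by simp_all
  have i4: "invariant (f 4)" "homog 4 (f 4)" using ih[of 4] by simp_all
  have i5: "invariant (f 5)" "homog 5 (f 5)" using ih[of 5] by simp_all
  have z0: "f 0 (pt 1 b0 b1 b2 b3) = 0 \<and> f 0 (pt 0 b0 b1 b2 b3) = 0" for b0 b1 b2 b3
    by (rule deg2[OF i0])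
  have z1: "f 1 (pt 1 b0 b1 b2 b3) = 0 \<and> f 1 (pt 0 b0 b1 b2 b3) = 0" for b0 b1 b2 b3
    by (rule deg_odd[OF i1]) simp
  have z2: "f 2 (pt 1 b0 b1 b2 b3) = 0 \<and> f 2 (pt 0 b0 b1 b2 b3) = 0" for b0 b1 b2 b3
    by (rule deg_odd[OF i2]) simp
  have z5: "f 5 (pt 1 b0 b1 b2 b3) = 0 \<and> f 5 (pt 0 b0 b1 b2 b3) = 0" for b0 b1 b2 b3
    by (rule deg_odd[OF i5]) simp
  obtain qJ qK qD where q:
    "\<And>b0 b1 b2 b3. f 3 (pt 1 b0 b1 b2 b3) = qJ*b3 + qK*(3*b1*b3 - b2^2) + qD * Dr b0 b1 b2 b3"
    "\<And>b0 b1 b2 b3. f 3 (pt 0 b0 b1 b2 b3) = qD * Dr b0 b1 b2 b3"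
    using deg4[OF i3] by blast
  obtain rJ rK rD where r:
    "\<And>b0 b1 b2 b3. f 4 (pt 1 b0 b1 b2 b3) = rJ*b3 + rK*(3*b1*b3 - b2^2) + rD * Dr b0 b1 b2 b3"
    "\<And>b0 b1 b2 b3. f 4 (pt 0 b0 b1 b2 b3) = rD * Dr b0 b1 b2 b3"
    using deg4[OF i4] by blast
  obtain u v w where uvw: "u \<noteq> 0 \<or> v \<noteq> 0 \<or> w \<noteq> 0" "qJ*u + qK*v + qD*w = 0" "rJ*u + rK*v + rD*w = 0"
    using kernel3 by blast
  have allz: "\<forall>i<length [2, 3, 3, 4, 4, 5::nat]. f i x = 0"
    if "f 0 x = 0" "f 1 x = 0" "f 2 x = 0" "f 3 x = 0" "f 4 x = 0" "f 5 x = 0" for x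
    using that by (auto simp: less_Suc_eq numeral_eq_Suc)
  have hs': "hsop_degrees [2, 3, 3, 4, 4, 5::nat] f" using hs by simp
  show False
  proof (cases "u \<noteq> 0")
    case True
    define b1 where "b1 = v / (3*u)"
    define s where "s = csqrt (-(w + 4*b1^3*u)/(27*u^2))"
    have s2: "s^2 = -(w + 4*b1^3*u)/(27*u^2)" unfolding s_def by (rule power2_csqrt)
    have e1: "3*b1*u = v" using True by (simp add: b1_def)
    have s2': "27*u^2*s^2 = -(w + 4*b1^3*u)" using s2 True by (simp add: field_simps)
    have "Dr s b1 0 u = -4*b1^3*u - 27*u^2*s^2" by (simp add: Dr_def algebra_simps power2_eq_square)
    then have e2: "Dr s b1 0 u = w" unfolding s2' by simp
    let ?x = "pt 1 s b1 0 u"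
    have "f 3 ?x = 0" unfolding q using e1 e2 uvw(2) by simp
    moreover have "f 4 ?x = 0" unfolding r using e1 e2 uvw(3) by simp
    ultimately have "\<forall>i<length [2, 3, 3, 4, 4, 5::nat]. f i ?x = 0" using z0 z1 z2 z5 allz by blast
    then show False
      using no_common_zero[OF hs' pt_V[of 1 s b1 0 u] _ inv_J _ J_scale] True J_pt[of s b1 0 u] by simp
  next
    case u0: False
    show False
    proof (cases "v \<noteq> 0")
      case True
      define s where "s = csqrt (-v)"
      have s2: "s^2 = -v" unfolding s_def by (rule power2_csqrt)
      then have sn: "s \<noteq> 0" using True by auto
      define b0 where "b0 = -w/(4*s^3)"
      have e1: "3*0*0 - s^2 = v" using s2 by simp
      have e2: "Dr b0 0 s 0 = w" unfolding Dr_def b0_def using sn by (simp add: field_simps)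
      let ?x = "pt 1 b0 0 s 0"
      have "f 3 ?x = 0" unfolding q using e1 e2 uvw(2) u0 by simp
      moreover have "f 4 ?x = 0" unfolding r using e1 e2 uvw(3) u0 by simp
      ultimately have "\<forall>i<length [2, 3, 3, 4, 4, 5::nat]. f i ?x = 0" using z0 z1 z2 z5 allz by blast
      then show False
        using no_common_zero[OF hs' pt_V[of 1 b0 0 s 0] _ inv_K _ K_scale] True s2 K_pt[of b0 0 s 0] by simp
    next
      case v0: False
      then have wn: "w \<noteq> 0" using u0 uvw(1) by auto
      define s where "s = csqrt (-w/27)"
      have s2: "s^2 = -w/27" unfolding s_def by (rule power2_csqrt)
      have e2: "Dr 1 0 0 s = w" unfolding Dr_def using s2 by simp
      let ?x = "pt 0 1 0 0 s"
      have "f 3 ?x = 0" unfolding q using e2 uvw(2) u0 v0 by simp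
      moreover have "f 4 ?x = 0" unfolding r using e2 uvw(3) u0 v0 by simp
      ultimately have "\<forall>i<length [2, 3, 3, 4, 4, 5::nat]. f i ?x = 0" using z0 z1 z2 z5 allz by blast
      then show False
        using no_common_zero[OF hs' pt_V[of 0 1 0 0 s] _ inv_D _ D_scale] wn e2 D_pt[of 0 1 0 0 s] by simp
    qed
  qed
qed


end
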